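(* Let $X$ be a $T_1$-space. Then $\overline{\mathrm{F}}(X)\simeq\overline{\mathrm{F}}(\mathcal{O}X)$ and $\mathrm{F}(X)\simeq\mathrm{F}(\mathcal{O}X)$ as posets.
   Context: $\overline{\mathrm{F}}(X)$ is the set of all functions $X\to[-\infty,+\infty]$ and $\mathrm{F}(X)$ the set of all functions $X\to\mathbb{R}$, both ordered pointwise. $\mathcal{O}X$ is the frame of open sets of $X$. For a frame $L$: $\mathbb{Q}$ is the rationals; a sublocale of $L$ is a subset closed under arbitrary meets and such that $x\to s\in S$ for $x\in L$, $s\in S$; $\mathrm{coS}(L)$ is the frame of sublocales ordered by reverse inclusion, with pseudocomplement $^\ast$. The frame $\mathfrak{L}(\overline{\mathbb{IR}})$ is presented by generators $(r,\textsf{---})$, $(\textsf{---},s)$ ($r,s\in\mathbb{Q}$) with relations (r1) $(r,\textsf{---})\wedge(\textsf{---},s)=0$ for $r\ge s$; (r3) $(r,\textsf{---})=\bigvee_{s>r}(s,\textsf{---})$; (r4) $(\textsf{---},s)=\bigvee_{r<s}(\textsf{---},r)$. $\overline{\mathrm{F}}(L)$ is the set of frame homomorphisms $f\colon\mathfrak{L}(\overline{\mathbb{IR}})\to\mathrm{coS}(L)$ with $f(r,\textsf{---})^\ast\le f(\textsf{---},s)$ and $f(\textsf{---},s)^\ast\le f(r,\textsf{---})$ for $r<s$, ordered by $f\le g$ iff $f(r,\textsf{---})\le g(r,\textsf{---})$ and $g(\textsf{---},s)\le f(\textsf{---},s)$; it is a complete lattice with top $\boldsymbol{+\infty}$ ($(r,\textsf{---})\mapsto1$,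 $(\textsf{---},s)\mapsto0$) and bottom $\boldsymbol{-\infty}$ ($(r,\textsf{---})\mapsto0$, $(\textsf{---},s)\mapsto1$). $\mathrm{F}(L)$ is the set of $f\in\overline{\mathrm{F}}(L)$ such that for all $g\in\overline{\mathrm{F}}(L)$, $f\vee g=\boldsymbol{+\infty}\Rightarrow g=\boldsymbol{+\infty}$ and $f\wedge g=\boldsymbol{-\infty}\Rightarrow g=\boldsymbol{-\infty}$. *)

theory Defs
  imports "HOL-Analysis.Analysis" "HOL-Library.Extended_Real" "HOL-Library.FuncSet"
begin

definition is_lub :: "('b \<Rightarrow> 'b \<Rightarrow> bool) \<Rightarrow> 'b set \<Rightarrow> 'b set \<Rightarrow> 'b \<Rightarrow> bool" where
  "is_lub le A S x \<longleftrightarrow> x \<in> A \<and> (\<forall>s\<in>S. le s x) \<and> (\<forall>y\<in>A. (\<forall>s\<in>S. le s y) \<longrightarrow> le x y)"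

definition is_glb :: "('b \<Rightarrow> 'b \<Rightarrow> bool) \<Rightarrow> 'b set \<Rightarrow> 'b set \<Rightarrow> 'b \<Rightarrow> bool" where
  "is_glb le A S x \<longleftrightarrow> x \<in> A \<and> (\<forall>s\<in>S. le x s) \<and> (\<forall>y\<in>A. (\<forall>s\<in>S. le y s) \<longrightarrow> le y x)"

definition ljoin :: "('b \<Rightarrow> 'b \<Rightarrow> bool) \<Rightarrow> 'b set \<Rightarrow> 'b set \<Rightarrow> 'b" where
  "ljoin le A S = (THE x. is_lub le A S x)"

definition lmeet :: "('b \<Rightarrow> 'b \<Rightarrow> bool) \<Rightarrow> 'b set \<Rightarrow> 'b set \<Rightarrow> 'b" where
  "lmeet le A S = (THE x. is_glb le A S x)"

definition heyting :: "('b \<Rightarrow> 'b \<Rightarrow> bool) \<Rightarrow> 'b set \<Rightarrow> 'b \<Rightarrow> 'b \<Rightarrow> 'b" where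
  "heyting le L x y = ljoin le L {z \<in> L. le (lmeet le L {z, x}) y}"

definition sublocale_of :: "('b \<Rightarrow> 'b \<Rightarrow> bool) \<Rightarrow> 'b set \<Rightarrow> 'b set \<Rightarrow> bool" where
  "sublocale_of le L S \<longleftrightarrow> S \<subseteq> L \<and> (\<forall>T. T \<subseteq> S \<longrightarrow> lmeet le L T \<in> S)
     \<and> (\<forall>x\<in>L. \<forall>s\<in>S. heyting le L x s \<in> S)"

definition coS :: "('b \<Rightarrow> 'b \<Rightarrow> bool) \<Rightarrow> 'b set \<Rightarrow> 'b set set" where
  "coS le L = {S. sublocale_of le L S}"

definition coS_le :: "'b set \<Rightarrow> 'b set \<Rightarrow> bool" where
  "coS_le S T \<longleftrightarrow> T \<subseteq> S"

definition coS_join :: "('b \<Rightarrow> 'b \<Rightarrow> bool) \<Rightarrow> 'b set \<Rightarrow> 'b set set \<Rightarrow> 'b set" where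
  "coS_join le L A = ljoin coS_le (coS le L) A"

definition coS_meet :: "('b \<Rightarrow> 'b \<Rightarrow> bool) \<Rightarrow> 'b set \<Rightarrow> 'b set set \<Rightarrow> 'b set" where
  "coS_meet le L A = lmeet coS_le (coS le L) A"

definition coS_zero :: "('b \<Rightarrow> 'b \<Rightarrow> bool) \<Rightarrow> 'b set \<Rightarrow> 'b set" where
  "coS_zero le L = coS_join le L {}"

definition coS_one :: "('b \<Rightarrow> 'b \<Rightarrow> bool) \<Rightarrow> 'b set \<Rightarrow> 'b set" where
  "coS_one le L = coS_meet le L {}"

definition coS_pc :: "('b \<Rightarrow> 'b \<Rightarrow> bool) \<Rightarrow> 'b set \<Rightarrow> 'b set \<Rightarrow> 'b set" where
  "coS_pc le L S = coS_join le L {T \<in> coS le L. coS_meet le L {T, S} = coS_zero le L}"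

text \<open>A frame homomorphism f from the frame presented by generators (r,--), (--,s) and
  relations (r1), (r3), (r4) into coS(L) is (by the universal property of the presentation)
  the same as an assignment of the generators, a r = f(r,--) and b s = f(--,s), to elements
  of coS(L) that satisfy the relations in coS(L).  We represent f by the pair (a, b).\<close>

definition frame_hom_LIR :: "('b \<Rightarrow> 'b \<Rightarrow> bool) \<Rightarrow> 'b set
     \<Rightarrow> (rat \<Rightarrow> 'b set) \<times> (rat \<Rightarrow> 'b set) \<Rightarrow> bool" where
  "frame_hom_LIR le L f \<longleftrightarrow>
     (\<forall>r. fst f r \<in> coS le L) \<and> (\<forall>s. snd f s \<in> coS le L) \<and>
     (\<forall>r s. s \<le> r \<longrightarrow> coS_meet le L {fst f r, snd f s} = coS_zero le L) \<and>
     (\<forall>r. fst f r = coS_join le L {fst f s |s. s > r}) \<and>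
     (\<forall>s. snd f s = coS_join le L {snd f r |r. r < s})"

definition Fbar_frame :: "('b \<Rightarrow> 'b \<Rightarrow> bool) \<Rightarrow> 'b set
     \<Rightarrow> ((rat \<Rightarrow> 'b set) \<times> (rat \<Rightarrow> 'b set)) set" where
  "Fbar_frame le L = {f. frame_hom_LIR le L f \<and>
     (\<forall>r s. r < s \<longrightarrow> coS_le (coS_pc le L (fst f r)) (snd f s)
                    \<and> coS_le (coS_pc le L (snd f s)) (fst f r))}"

definition Fbar_le :: "(rat \<Rightarrow> 'b set) \<times> (rat \<Rightarrow> 'b set) \<Rightarrow> (rat \<Rightarrow> 'b set) \<times> (rat \<Rightarrow> 'b set) \<Rightarrow> bool" where
  "Fbar_le f g \<longleftrightarrow> (\<forall>r. coS_le (fst f r) (fst g r)) \<and> (\<forall>s. coS_le (snd g s) (snd f s))"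

definition Fbar_top :: "('b \<Rightarrow> 'b \<Rightarrow> bool) \<Rightarrow> 'b set \<Rightarrow> (rat \<Rightarrow> 'b set) \<times> (rat \<Rightarrow> 'b set)" where
  "Fbar_top le L = ((\<lambda>r. coS_one le L), (\<lambda>s. coS_zero le L))"

definition Fbar_bot :: "('b \<Rightarrow> 'b \<Rightarrow> bool) \<Rightarrow> 'b set \<Rightarrow> (rat \<Rightarrow> 'b set) \<times> (rat \<Rightarrow> 'b set)" where
  "Fbar_bot le L = ((\<lambda>r. coS_zero le L), (\<lambda>s. coS_one le L))"

text \<open>F(L): f \<or> g = +\<infinity> means +\<infinity> is the least upper bound of {f,g} in Fbar(L); dually for \<and>.\<close>
definition F_frame :: "('b \<Rightarrow> 'b \<Rightarrow> bool) \<Rightarrow> 'b set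
     \<Rightarrow> ((rat \<Rightarrow> 'b set) \<times> (rat \<Rightarrow> 'b set)) set" where
  "F_frame le L = {f \<in> Fbar_frame le L. \<forall>g \<in> Fbar_frame le L.
     (is_lub Fbar_le (Fbar_frame le L) {f, g} (Fbar_top le L) \<longrightarrow> g = Fbar_top le L) \<and>
     (is_glb Fbar_le (Fbar_frame le L) {f, g} (Fbar_bot le L) \<longrightarrow> g = Fbar_bot le L)}"

definition opens :: "'a topology \<Rightarrow> 'a set set" where
  "opens X = {U. openin X U}"

definition Fbar_space :: "'a topology \<Rightarrow> ('a \<Rightarrow> ereal) set" where
  "Fbar_space X = topspace X \<rightarrow>\<^sub>E (UNIV :: ereal set)"

definition F_space :: "'a topology \<Rightarrow> ('a \<Rightarrow> real) set" where
  "F_space X = topspace X \<rightarrow>\<^sub>E (UNIV :: real set)"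

definition pointwise_le :: "'a topology \<Rightarrow> ('a \<Rightarrow> 'c::order) \<Rightarrow> ('a \<Rightarrow> 'c) \<Rightarrow> bool" where
  "pointwise_le X f g \<longleftrightarrow> (\<forall>x\<in>topspace X. f x \<le> g x)"

definition order_isomorphic :: "'p set \<Rightarrow> ('p \<Rightarrow> 'p \<Rightarrow> bool) \<Rightarrow> 'q set \<Rightarrow> ('q \<Rightarrow> 'q \<Rightarrow> bool) \<Rightarrow> bool" where
  "order_isomorphic A leA B leB \<longleftrightarrow>
     (\<exists>\<phi>. bij_betw \<phi> A B \<and> (\<forall>x\<in>A. \<forall>y\<in>A. leA x y \<longleftrightarrow> leB (\<phi> x) (\<phi> y)))"

end

theory Submission
  imports Defs
begin

lemma lmeet_sub_eq:
  assumes "is_glb (\<subseteq>) A S x" shows "lmeet (\<subseteq>) A S = x"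
  unfolding lmeet_def
  by (rule the_equality[where P="is_glb (\<subseteq>) A S", OF assms]) (use assms in \<open>auto simp: is_glb_def intro: subset_antisym\<close>)

lemma ljoin_sub_eq:
  assumes "is_lub (\<subseteq>) A S x" shows "ljoin (\<subseteq>) A S = x"
  unfolding ljoin_def
  by (rule the_equality[where P="is_lub (\<subseteq>) A S", OF assms]) (use assms in \<open>auto simp: is_lub_def intro: subset_antisym\<close>)

lemma lmeet_coS_eq:
  assumes "is_glb coS_le A S x" shows "lmeet coS_le A S = x"
  unfolding lmeet_def
  by (rule the_equality[where P="is_glb coS_le A S", OF assms]) (use assms in \<open>auto simp: is_glb_def coS_le_def intro: subset_antisym\<close>)

lemma ljoin_coS_eq:
  assumes "is_lub coS_le A S x" shows "ljoin coS_le A S = x"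
  unfolding ljoin_def
  by (rule the_equality[where P="is_lub coS_le A S", OF assms]) (use assms in \<open>auto simp: is_lub_def coS_le_def intro: subset_antisym\<close>)

lemma in_opens[simp]: "U \<in> opens X \<longleftrightarrow> openin X U"
  by (simp add: opens_def)

lemma lmeet_opens: "lmeet (\<subseteq>) (opens X) S = X interior_of (topspace X \<inter> \<Inter>S)"
proof (rule lmeet_sub_eq)
  have "y \<subseteq> X interior_of (topspace X \<inter> \<Inter> S)" if "openin X y" "\<forall>s\<in>S. y \<subseteq> s" for y
    using that by (intro interior_of_maximal) (auto dest: openin_subset)
  then show "is_glb (\<subseteq>) (opens X) S (X interior_of (topspace X \<inter> \<Inter> S))"
    unfolding is_glb_def
    using interior_of_subset[of X "topspace X \<inter> \<Inter> S"]
    by auto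
qed

lemma lmeet_opens2:
  assumes "openin X a" "openin X b"
  shows "lmeet (\<subseteq>) (opens X) {a, b} = a \<inter> b"
proof -
  have "topspace X \<inter> \<Inter>{a,b} = a \<inter> b" using assms openin_subset by auto
  then show ?thesis using assms by (simp add: lmeet_opens interior_of_openin openin_Int)
qed

lemma ljoin_opens:
  assumes "\<And>U. U \<in> K \<Longrightarrow> openin X U" shows "ljoin (\<subseteq>) (opens X) K = \<Union>K"
  by (rule ljoin_sub_eq) (use assms in \<open>auto simp: is_lub_def\<close>)

definition hy :: "'a topology \<Rightarrow> 'a set \<Rightarrow> 'a set \<Rightarrow> 'a set" where
  "hy X U V = \<Union>{z. openin X z \<and> z \<inter> U \<subseteq> V}"

lemma heyting_opens:
  assumes "openin X U"
  shows "heyting (\<subseteq>) (opens X) U V = hy X U V"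
proof -
  have "{z \<in> opens X. lmeet (\<subseteq>) (opens X) {z, U} \<subseteq> V} = {z. openin X z \<and> z \<inter> U \<subseteq> V}"
    using assms lmeet_opens2[of X _ U] by auto
  then show ?thesis unfolding heyting_def hy_def
    using ljoin_opens[of "{z. openin X z \<and> z \<inter> U \<subseteq> V}" X] by simp
qed

lemma openin_hy[simp]: "openin X (hy X U V)"
  unfolding hy_def by auto

lemma hy_Int: "hy X U V \<inter> U \<subseteq> V"
  unfolding hy_def by auto

lemma hy_max: "openin X z \<Longrightarrow> z \<inter> U \<subseteq> V \<Longrightarrow> z \<subseteq> hy X U V"
  unfolding hy_def by auto

definition subloc :: "'a topology \<Rightarrow> 'a set set \<Rightarrow> bool" where
  "subloc X S \<longleftrightarrow> S \<subseteq> opens X \<and> (\<forall>T. T \<subseteq> S \<longrightarrow> X interior_of (topspace X \<inter> \<Inter>T) \<in> S)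
     \<and> (\<forall>U. openin X U \<longrightarrow> (\<forall>s\<in>S. hy X U s \<in> S))"

lemma sublocale_of_opens: "sublocale_of (\<subseteq>) (opens X) S \<longleftrightarrow> subloc X S"
  unfolding sublocale_of_def subloc_def
  by (auto simp: lmeet_opens heyting_opens)

lemma in_coS_opens[simp]: "S \<in> coS (\<subseteq>) (opens X) \<longleftrightarrow> subloc X S"
  unfolding coS_def by (simp add: sublocale_of_opens)

lemma coS_opens: "coS (\<subseteq>) (opens X) = {S. subloc X S}"
  by auto

lemma subloc_Inter:
  assumes "\<And>S. S \<in> F \<Longrightarrow> subloc X S"
  shows "subloc X (opens X \<inter> \<Inter>F)"
  using assms unfolding subloc_def
  apply auto
  by (meson subsetD subset_trans le_infI2 Inter_lower)+

lemma subloc_opens: "subloc X (opens X)"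
  using subloc_Inter[of "{}" X] by simp

lemma subloc_top: "subloc X S \<Longrightarrow> topspace X \<in> S"
  unfolding subloc_def
  by (metis Inf_empty Int_UNIV_right empty_subsetI interior_of_topspace)

lemma subloc_sub: "subloc X S \<Longrightarrow> S \<subseteq> opens X"
  unfolding subloc_def by auto

lemma subloc_open: "subloc X S \<Longrightarrow> s \<in> S \<Longrightarrow> openin X s"
  unfolding subloc_def by auto

lemma subloc_meet: "subloc X S \<Longrightarrow> T \<subseteq> S \<Longrightarrow> X interior_of (topspace X \<inter> \<Inter>T) \<in> S"
  unfolding subloc_def by auto

lemma subloc_meet2:
  assumes "subloc X S" "a \<in> S" "b \<in> S" shows "a \<inter> b \<in> S"
proof -
  have "openin X a" "openin X b" using assms subloc_open by auto
  then have "X interior_of (topspace X \<inter> \<Inter>{a,b}) = a \<inter> b"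
    using lmeet_opens2[of X a b] by (simp add: lmeet_opens)
  then show ?thesis using subloc_meet[OF assms(1), of "{a,b}"] assms by auto
qed

lemma subloc_single: "subloc X {topspace X}"
  unfolding subloc_def in_opens
proof (intro conjI allI impI ballI)
  fix T assume "T \<subseteq> {topspace X}"
  then have "topspace X \<inter> \<Inter>T = topspace X" by auto
  then show "X interior_of (topspace X \<inter> \<Inter> T) \<in> {topspace X}" by simp
next
  fix U s assume "openin X U" "s \<in> {topspace X}"
  then show "hy X U s \<in> {topspace X}"
    unfolding hy_def by (auto dest: openin_subset)
qed auto

lemma coS_join_opens:
  assumes "\<And>S. S \<in> F \<Longrightarrow> subloc X S"
  shows "coS_join (\<subseteq>) (opens X) F = opens X \<inter> \<Inter>F"
  unfolding coS_join_def
  by (rule ljoin_coS_eq) (use assms subloc_Inter[OF assms] in \<open>auto simp: is_lub_def coS_le_def coS_opens dest: subloc_sub\<close>)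

lemma coS_zero_opens: "coS_zero (\<subseteq>) (opens X) = opens X"
  unfolding coS_zero_def using coS_join_opens[of "{}" X] by simp

lemma coS_one_opens: "coS_one (\<subseteq>) (opens X) = {topspace X}"
  unfolding coS_one_def coS_meet_def
  by (rule lmeet_coS_eq) (auto simp: is_glb_def coS_le_def coS_opens subloc_single subloc_top)

definition prodS :: "'a set set \<Rightarrow> 'a set set \<Rightarrow> 'a set set" where
  "prodS A B = {u \<inter> v | u v. u \<in> A \<and> v \<in> B}"

lemma hy_Int_eq:
  assumes "openin X u" "openin X v"
  shows "hy X U (u \<inter> v) = hy X U u \<inter> hy X U v"
proof
  show "hy X U (u \<inter> v) \<subseteq> hy X U u \<inter> hy X U v"
    using hy_Int[of X U "u \<inter> v"] hy_max[of X "hy X U (u \<inter> v)" U u] hy_max[of X "hy X U (u \<inter> v)" U v]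
    by auto
  show "hy X U u \<inter> hy X U v \<subseteq> hy X U (u \<inter> v)"
    using hy_Int[of X U u] hy_Int[of X U v] by (intro hy_max) auto
qed

lemma subloc_prodS:
  assumes A: "subloc X A" and B: "subloc X B"
  shows "subloc X (prodS A B)"
  unfolding subloc_def
proof (intro conjI allI impI ballI)
  show "prodS A B \<subseteq> opens X"
    using subloc_open[OF A] subloc_open[OF B] by (auto simp: prodS_def intro!: openin_Int)
next
  fix W assume W: "W \<subseteq> prodS A B"
  then have "\<forall>w\<in>W. \<exists>p. fst p \<in> A \<and> snd p \<in> B \<and> w = fst p \<inter> snd p"
    unfolding prodS_def by force
  then obtain p where p: "\<And>w. w \<in> W \<Longrightarrow> fst (p w) \<in> A \<and> snd (p w) \<in> B \<and> w = fst (p w) \<inter> snd (p w)"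
    by metis
  have eq: "topspace X \<inter> \<Inter>W = (topspace X \<inter> \<Inter>((\<lambda>w. fst (p w)) ` W)) \<inter> (topspace X \<inter> \<Inter>((\<lambda>w. snd (p w)) ` W))"
    using p by blast
  have "X interior_of (topspace X \<inter> \<Inter>((\<lambda>w. fst (p w)) ` W)) \<in> A"
    using p by (intro subloc_meet[OF A]) auto
  moreover have "X interior_of (topspace X \<inter> \<Inter>((\<lambda>w. snd (p w)) ` W)) \<in> B"
    using p by (intro subloc_meet[OF B]) auto
  ultimately show "X interior_of (topspace X \<inter> \<Inter>W) \<in> prodS A B"
    unfolding eq interior_of_Int prodS_def by blast
next
  fix U s assume U: "openin X U" and s: "s \<in> prodS A B"
  then obtain u v where uv: "u \<in> A" "v \<in> B" "s = u \<inter> v" unfolding prodS_def by auto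
  have "openin X u" "openin X v" using uv subloc_open[OF A] subloc_open[OF B] by auto
  then have "hy X U s = hy X U u \<inter> hy X U v" using uv hy_Int_eq by simp
  moreover have "hy X U u \<in> A" "hy X U v \<in> B"
    using A B uv U unfolding subloc_def by auto
  ultimately show "hy X U s \<in> prodS A B" unfolding prodS_def by blast
qed

lemma coS_meet_opens:
  assumes A: "subloc X A" and B: "subloc X B"
  shows "coS_meet (\<subseteq>) (opens X) {A, B} = prodS A B"
  unfolding coS_meet_def
proof (rule lmeet_coS_eq)
  have subA: "A \<subseteq> prodS A B"
  proof
    fix u assume "u \<in> A"
    moreover have "u \<subseteq> topspace X" using \<open>u \<in> A\<close> subloc_open[OF A] by (auto dest: openin_subset)
    ultimately show "u \<in> prodS A B" unfolding prodS_def using subloc_top[OF B]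
      by (intro CollectI exI[of _ u] exI[of _ "topspace X"]) auto
  qed
  have subB: "B \<subseteq> prodS A B"
  proof
    fix u assume "u \<in> B"
    moreover have "u \<subseteq> topspace X" using \<open>u \<in> B\<close> subloc_open[OF B] by (auto dest: openin_subset)
    ultimately show "u \<in> prodS A B" unfolding prodS_def using subloc_top[OF A]
      by (intro CollectI exI[of _ "topspace X"] exI[of _ u]) auto
  qed
  have least: "prodS A B \<subseteq> y" if "subloc X y" "A \<subseteq> y" "B \<subseteq> y" for y
    using that subloc_meet2[of X y] unfolding prodS_def by blast
  show "is_glb coS_le (coS (\<subseteq>) (opens X)) {A, B} (prodS A B)"
    unfolding is_glb_def coS_le_def coS_opens
    using subA subB least subloc_prodS[OF A B] by auto
qed


definition Px :: "'a topology \<Rightarrow> 'a \<Rightarrow> 'a set" where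
  "Px X x = topspace X - {x}"

definition pt :: "'a topology \<Rightarrow> 'a set set \<Rightarrow> 'a set" where
  "pt X S = {x \<in> topspace X. Px X x \<in> S}"

definition SA :: "'a topology \<Rightarrow> 'a set \<Rightarrow> 'a set set" where
  "SA X A = {U. openin X U \<and> (\<forall>V. openin X V \<and> V \<inter> A \<subseteq> U \<longrightarrow> V \<subseteq> U)}"

definition hl :: "'a topology \<Rightarrow> 'a set \<Rightarrow> 'a set \<Rightarrow> 'a set" where
  "hl X A U = \<Union>{V. openin X V \<and> V \<inter> A \<subseteq> U}"

lemma SA_subloc: "subloc X (SA X A)"
  unfolding subloc_def
proof (intro conjI allI impI ballI)
  show "SA X A \<subseteq> opens X" unfolding SA_def by auto
next
  fix T assume T: "T \<subseteq> SA X A"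
  let ?m = "X interior_of (topspace X \<inter> \<Inter> T)"
  have "V \<subseteq> ?m" if "openin X V" "V \<inter> A \<subseteq> ?m" for V
  proof (rule interior_of_maximal[OF _ that(1)])
    have "V \<subseteq> t" if "t \<in> T" for t
    proof -
      have "V \<inter> A \<subseteq> t" using \<open>V \<inter> A \<subseteq> ?m\<close> interior_of_subset[of X "topspace X \<inter> \<Inter> T"] that by blast
      then show ?thesis using T that \<open>openin X V\<close> unfolding SA_def by blast
    qed
    then show "V \<subseteq> topspace X \<inter> \<Inter> T" using openin_subset[OF \<open>openin X V\<close>] by blast
  qed
  then show "?m \<in> SA X A" unfolding SA_def by auto
next
  fix U s assume U: "openin X U" and s: "s \<in> SA X A"
  have "V \<subseteq> hy X U s" if "openin X V" "V \<inter> A \<subseteq> hy X U s" for V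
  proof -
    have "(V \<inter> U) \<inter> A \<subseteq> s" using that(2) hy_Int[of X U s] by blast
    moreover have "openin X (V \<inter> U)" using that(1) U by (rule openin_Int)
    ultimately have "V \<inter> U \<subseteq> s" using s unfolding SA_def by blast
    then show ?thesis using hy_max[OF that(1)] by blast
  qed
  then show "hy X U s \<in> SA X A" unfolding SA_def by auto
qed

lemma SA_mono: "A \<subseteq> B \<Longrightarrow> SA X A \<subseteq> SA X B"
  unfolding SA_def by blast

lemma openin_hl[simp]: "openin X (hl X A U)"
  unfolding hl_def by auto

lemma hl_Int: "hl X A U \<inter> A \<subseteq> U"
  unfolding hl_def by auto

lemma hl_max: "openin X V \<Longrightarrow> V \<inter> A \<subseteq> U \<Longrightarrow> V \<subseteq> hl X A U"
  unfolding hl_def by auto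

lemma hl_SA: "hl X A U \<in> SA X A"
proof -
  have "V \<subseteq> hl X A U" if "openin X V" "V \<inter> A \<subseteq> hl X A U" for V
    using that hl_Int[of X A U] by (intro hl_max) auto
  then show ?thesis unfolding SA_def by auto
qed

lemma hl_sup: "openin X U \<Longrightarrow> U \<subseteq> hl X A U"
  by (rule hl_max) auto

lemma SA_hl: "U \<in> SA X A \<Longrightarrow> hl X A U = U"
proof -
  assume U: "U \<in> SA X A"
  have "hl X A U \<subseteq> U" using U hl_Int[of X A U] unfolding SA_def by auto
  then show ?thesis using hl_sup[of X U A] U unfolding SA_def by auto
qed

lemma SA_empty: "SA X {} = {topspace X}"
  unfolding SA_def by (auto dest: openin_subset)

lemma SA_top: "topspace X \<subseteq> A \<Longrightarrow> SA X A = opens X"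
  unfolding SA_def by (auto dest: openin_subset)

locale T1X =
  fixes X :: "'a topology"
  assumes t1: "t1_space X"
begin

lemma Px_open: "x \<in> topspace X \<Longrightarrow> openin X (Px X x)"
  unfolding Px_def using t1 by (simp add: t1_space_closedin_singleton closedin_def)

lemma Px_cases: "openin X V \<Longrightarrow> Px X x \<subseteq> V \<Longrightarrow> V = Px X x \<or> V = topspace X"
  unfolding Px_def using openin_subset[of X V] by blast

lemma pt_SA: "pt X (SA X A) = topspace X \<inter> A"
proof (intro set_eqI iffI)
  fix x assume "x \<in> pt X (SA X A)"
  then have x: "x \<in> topspace X" "Px X x \<in> SA X A" unfolding pt_def by auto
  have "topspace X \<inter> A \<subseteq> Px X x \<Longrightarrow> topspace X \<subseteq> Px X x" using x unfolding SA_def by auto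
  then show "x \<in> topspace X \<inter> A" using x unfolding Px_def by auto
next
  fix x assume x: "x \<in> topspace X \<inter> A"
  then have "Px X x \<in> SA X A" using Px_open[of x] unfolding SA_def Px_def by (auto dest: openin_subset)
  then show "x \<in> pt X (SA X A)" using x unfolding pt_def by auto
qed

lemma SA_pt_sub:
  assumes S: "subloc X S" shows "SA X (pt X S) \<subseteq> S"
proof
  fix U assume U: "U \<in> SA X (pt X S)"
  let ?M = "X interior_of (topspace X \<inter> \<Inter>(Px X ` (pt X S - U)))"
  have Uo: "openin X U" using U unfolding SA_def by auto
  have "U \<subseteq> ?M"
  proof (rule interior_of_maximal[OF _ Uo])
    have "U \<subseteq> topspace X" using Uo by (rule openin_subset)
    then show "U \<subseteq> topspace X \<inter> \<Inter> (Px X ` (pt X S - U))" unfolding Px_def by blast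
  qed
  moreover have "?M \<inter> pt X S \<subseteq> U"
  proof
    fix y assume y: "y \<in> ?M \<inter> pt X S"
    show "y \<in> U"
    proof (rule ccontr)
      assume "y \<notin> U"
      then have "Px X y \<in> Px X ` (pt X S - U)" using y by blast
      then have "?M \<subseteq> Px X y" using interior_of_subset[of X "topspace X \<inter> \<Inter> (Px X ` (pt X S - U))"] by blast
      then show False using y unfolding Px_def by auto
    qed
  qed
  then have "?M \<subseteq> U" using U openin_interior_of unfolding SA_def by blast
  ultimately have "U = ?M" by auto
  moreover have "Px X ` (pt X S - U) \<subseteq> S" unfolding pt_def by blast
  then have "?M \<in> S" using subloc_meet[OF S] by blast
  ultimately show "U \<in> S" by simp
qed

lemma cover_pt:
  assumes S1: "subloc X S1" and S2: "subloc X S2" and full: "prodS S1 S2 = opens X"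
    and x: "x \<in> topspace X"
  shows "x \<in> pt X S1 \<or> x \<in> pt X S2"
proof -
  have "Px X x \<in> prodS S1 S2" using full Px_open[OF x] by simp
  then obtain u v where uv: "u \<in> S1" "v \<in> S2" "Px X x = u \<inter> v" unfolding prodS_def by auto
  have ou: "openin X u" "openin X v" using uv subloc_open S1 S2 by auto
  have "Px X x \<subseteq> u" "Px X x \<subseteq> v" using uv(3) by auto
  then have c: "u = Px X x \<or> u = topspace X" "v = Px X x \<or> v = topspace X"
    using Px_cases[OF ou(1)] Px_cases[OF ou(2)] by auto
  have "x \<notin> Px X x" unfolding Px_def by simp
  then have "\<not> (u = topspace X \<and> v = topspace X)" using uv(3) x by auto
  then have "Px X x \<in> S1 \<or> Px X x \<in> S2" using c uv(1,2) by metis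
  then show ?thesis using x unfolding pt_def by blast
qed

lemma prod_full:
  assumes S1: "subloc X S1" and S2: "subloc X S2"
    and cov: "topspace X \<subseteq> A \<union> B" and A: "SA X A \<subseteq> S1" and B: "SA X B \<subseteq> S2"
  shows "prodS S1 S2 = opens X"
proof
  show "prodS S1 S2 \<subseteq> opens X" using subloc_prodS[OF S1 S2] subloc_sub by blast
next
  show "opens X \<subseteq> prodS S1 S2"
  proof
    fix U assume "U \<in> opens X"
    then have U: "openin X U" by simp
    have "hl X A U \<inter> hl X B U = U"
    proof
      show "U \<subseteq> hl X A U \<inter> hl X B U" using hl_sup[OF U] by auto
      have "hl X A U \<subseteq> topspace X" using openin_subset[OF openin_hl[of X A U]] .
      then show "hl X A U \<inter> hl X B U \<subseteq> U"
        using hl_Int[of X A U] hl_Int[of X B U] cov by blast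
    qed
    moreover have "hl X A U \<in> S1" "hl X B U \<in> S2" using A B hl_SA by blast+
    ultimately show "U \<in> prodS S1 S2" unfolding prodS_def by blast
  qed
qed

lemma pc_opens:
  assumes S: "subloc X S"
  shows "coS_pc (\<subseteq>) (opens X) S = SA X (topspace X - pt X S)"
proof -
  let ?F = "{T \<in> coS (\<subseteq>) (opens X). coS_meet (\<subseteq>) (opens X) {T, S} = coS_zero (\<subseteq>) (opens X)}"
  have F: "?F = {T. subloc X T \<and> prodS T S = opens X}"
  proof (intro Collect_cong)
    fix T
    show "(T \<in> coS (\<subseteq>) (opens X) \<and> coS_meet (\<subseteq>) (opens X) {T, S} = coS_zero (\<subseteq>) (opens X))
       = (subloc X T \<and> prodS T S = opens X)"
      using coS_meet_opens[OF _ S, of T] by (auto simp only: in_coS_opens coS_zero_opens)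
  qed
  have "prodS (SA X (topspace X - pt X S)) S = opens X"
    using prod_full[OF SA_subloc S, of "topspace X - pt X S" "pt X S"] SA_pt_sub[OF S] by blast
  then have mem: "SA X (topspace X - pt X S) \<in> ?F"
    unfolding F using SA_subloc by blast
  have low: "SA X (topspace X - pt X S) \<subseteq> T" if "T \<in> ?F" for T
  proof -
    have T: "subloc X T" "prodS T S = opens X" using that F by auto
    have "topspace X - pt X S \<subseteq> pt X T" using cover_pt[OF T(1) S T(2)] by auto
    then have "SA X (topspace X - pt X S) \<subseteq> SA X (pt X T)" by (rule SA_mono)
    then show ?thesis using SA_pt_sub[OF T(1)] by (rule order_trans)
  qed
  have "coS_pc (\<subseteq>) (opens X) S = opens X \<inter> \<Inter>?F"
    unfolding coS_pc_def by (rule coS_join_opens) (simp only: mem_Collect_eq in_coS_opens)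
  also have "\<dots> = SA X (topspace X - pt X S)"
  proof
    show "opens X \<inter> \<Inter> ?F \<subseteq> SA X (topspace X - pt X S)" using mem by blast
    show "SA X (topspace X - pt X S) \<subseteq> opens X \<inter> \<Inter> ?F"
      using low subloc_sub[OF SA_subloc[of X "topspace X - pt X S"]] by blast
  qed
  finally show ?thesis .
qed

end


lemma dens3:
  fixes e1 e2 :: ereal
  assumes "e1 < e2" shows "\<exists>q::rat. e1 < ereal (of_rat q) \<and> ereal (of_rat q) < e2"
proof -
  obtain z where z: "e1 < ereal z" "ereal z < e2" using ereal_dense2[OF assms] by blast
  obtain w where w: "e1 < ereal w" "ereal w < ereal z" using ereal_dense2[OF z(1)] by blast
  have "w < z" using w(2) by simp
  then obtain q :: rat where q: "w < of_rat q" "of_rat q < z" using of_rat_dense by blast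
  have "ereal w < ereal (of_rat q)" using q(1) by simp
  then have "e1 < ereal (of_rat q)" using w(1) by (rule less_trans[rotated])
  moreover have "ereal (of_rat q) < ereal z" using q(2) by simp
  then have "ereal (of_rat q) < e2" using z(2) by (rule less_trans)
  ultimately show ?thesis by blast
qed

lemma ereal_rat_less: "ereal (of_rat r) < ereal (of_rat s) \<longleftrightarrow> r < s"
  by (simp add: of_rat_less)

lemma ereal_rat_le: "ereal (of_rat r) \<le> ereal (of_rat s) \<longleftrightarrow> r \<le> s"
  by (simp add: of_rat_less_eq)

lemma dens1:
  fixes e :: ereal
  shows "(\<forall>s. r < s \<longrightarrow> e < ereal (of_rat s)) \<longleftrightarrow> e \<le> ereal (of_rat r)"
proof
  assume H: "\<forall>s. r < s \<longrightarrow> e < ereal (of_rat s)"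
  show "e \<le> ereal (of_rat r)"
  proof (rule ccontr)
    assume "\<not> e \<le> ereal (of_rat r)"
    then have "ereal (of_rat r) < e" by simp
    then obtain q where q: "ereal (of_rat r) < ereal (of_rat q)" "ereal (of_rat q) < e" using dens3 by blast
    then have "r < q" using ereal_rat_less by blast
    then show False using H q(2) by auto
  qed
next
  assume "e \<le> ereal (of_rat r)"
  then show "\<forall>s. r < s \<longrightarrow> e < ereal (of_rat s)"
    using ereal_rat_less by (meson le_less_trans)
qed

lemma dens2:
  fixes e :: ereal
  shows "(\<forall>r. r < s \<longrightarrow> ereal (of_rat r) < e) \<longleftrightarrow> ereal (of_rat s) \<le> e"
proof
  assume H: "\<forall>r. r < s \<longrightarrow> ereal (of_rat r) < e"
  show "ereal (of_rat s) \<le> e"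
  proof (rule ccontr)
    assume "\<not> ereal (of_rat s) \<le> e"
    then have "e < ereal (of_rat s)" by simp
    then obtain q where q: "e < ereal (of_rat q)" "ereal (of_rat q) < ereal (of_rat s)" using dens3 by blast
    then have "q < s" using ereal_rat_less by blast
    then show False using H q(1) by (meson less_asym)
  qed
next
  assume "ereal (of_rat s) \<le> e"
  then show "\<forall>r. r < s \<longrightarrow> ereal (of_rat r) < e"
    using ereal_rat_less by (meson less_le_trans)
qed

definition lt :: "'a topology \<Rightarrow> ('a \<Rightarrow> ereal) \<Rightarrow> rat \<Rightarrow> 'a set" where
  "lt X \<phi> s = {x \<in> topspace X. \<phi> x < ereal (of_rat s)}"

definition gt :: "'a topology \<Rightarrow> ('a \<Rightarrow> ereal) \<Rightarrow> rat \<Rightarrow> 'a set" where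
  "gt X \<phi> r = {x \<in> topspace X. ereal (of_rat r) < \<phi> x}"

definition aF :: "'a topology \<Rightarrow> ('a \<Rightarrow> ereal) \<Rightarrow> rat \<Rightarrow> 'a set set" where
  "aF X \<phi> r = {U. openin X U \<and> (\<forall>s. r < s \<longrightarrow> U \<in> SA X (lt X \<phi> s))}"

definition bF :: "'a topology \<Rightarrow> ('a \<Rightarrow> ereal) \<Rightarrow> rat \<Rightarrow> 'a set set" where
  "bF X \<phi> s = {U. openin X U \<and> (\<forall>r. r < s \<longrightarrow> U \<in> SA X (gt X \<phi> r))}"

definition Phi :: "'a topology \<Rightarrow> ('a \<Rightarrow> ereal) \<Rightarrow> (rat \<Rightarrow> 'a set set) \<times> (rat \<Rightarrow> 'a set set)" where
  "Phi X \<phi> = (aF X \<phi>, bF X \<phi>)"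

lemma aF_eq: "aF X \<phi> r = opens X \<inter> \<Inter>{SA X (lt X \<phi> s) | s. r < s}"
  unfolding aF_def by auto

lemma bF_eq: "bF X \<phi> s = opens X \<inter> \<Inter>{SA X (gt X \<phi> r) | r. r < s}"
  unfolding bF_def by auto

lemma aF_subloc: "subloc X (aF X \<phi> r)"
  unfolding aF_eq by (rule subloc_Inter) (auto simp: SA_subloc)

lemma bF_subloc: "subloc X (bF X \<phi> r)"
  unfolding bF_eq by (rule subloc_Inter) (auto simp: SA_subloc)

context T1X
begin

lemma Px_in_SA: "x \<in> topspace X \<Longrightarrow> Px X x \<in> SA X A \<longleftrightarrow> x \<in> A"
  using pt_SA[of A] unfolding pt_def by blast

lemma pt_aF: "pt X (aF X \<phi> r) = {x \<in> topspace X. \<phi> x \<le> ereal (of_rat r)}"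
proof -
  have "x \<in> pt X (aF X \<phi> r) \<longleftrightarrow> x \<in> topspace X \<and> \<phi> x \<le> ereal (of_rat r)" for x
  proof (cases "x \<in> topspace X")
    case True
    then have "x \<in> pt X (aF X \<phi> r) \<longleftrightarrow> (\<forall>s. r < s \<longrightarrow> x \<in> lt X \<phi> s)"
      unfolding pt_def aF_def using Px_open[OF True] Px_in_SA[OF True] by auto
    also have "\<dots> \<longleftrightarrow> (\<forall>s. r < s \<longrightarrow> \<phi> x < ereal (of_rat s))" using True unfolding lt_def by auto
    also have "\<dots> \<longleftrightarrow> \<phi> x \<le> ereal (of_rat r)" by (rule dens1)
    finally show ?thesis using True by simp
  qed (auto simp: pt_def)
  then show ?thesis by blast
qed

lemma pt_bF: "pt X (bF X \<phi> s) = {x \<in> topspace X. ereal (of_rat s) \<le> \<phi> x}"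
proof -
  have "x \<in> pt X (bF X \<phi> s) \<longleftrightarrow> x \<in> topspace X \<and> ereal (of_rat s) \<le> \<phi> x" for x
  proof (cases "x \<in> topspace X")
    case True
    then have "x \<in> pt X (bF X \<phi> s) \<longleftrightarrow> (\<forall>r. r < s \<longrightarrow> x \<in> gt X \<phi> r)"
      unfolding pt_def bF_def using Px_open[OF True] Px_in_SA[OF True] by auto
    also have "\<dots> \<longleftrightarrow> (\<forall>r. r < s \<longrightarrow> ereal (of_rat r) < \<phi> x)" using True unfolding gt_def by auto
    also have "\<dots> \<longleftrightarrow> ereal (of_rat s) \<le> \<phi> x" by (rule dens2)
    finally show ?thesis using True by simp
  qed (auto simp: pt_def)
  then show ?thesis by blast
qed

lemma Phi_le_iff: "Fbar_le (Phi X \<phi>) (Phi X \<psi>) \<longleftrightarrow> (\<forall>x\<in>topspace X. \<phi> x \<le> \<psi> x)"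
proof
  assume H: "\<forall>x\<in>topspace X. \<phi> x \<le> \<psi> x"
  have "lt X \<psi> s \<subseteq> lt X \<phi> s" for s using H unfolding lt_def by (auto intro: le_less_trans)
  then have a: "aF X \<psi> r \<subseteq> aF X \<phi> r" for r unfolding aF_def using SA_mono by blast
  have "gt X \<phi> s \<subseteq> gt X \<psi> s" for s using H unfolding gt_def by (auto intro: less_le_trans)
  then have b: "bF X \<phi> r \<subseteq> bF X \<psi> r" for r unfolding bF_def using SA_mono by blast
  show "Fbar_le (Phi X \<phi>) (Phi X \<psi>)" unfolding Fbar_le_def Phi_def coS_le_def using a b by simp
next
  assume "Fbar_le (Phi X \<phi>) (Phi X \<psi>)"
  then have a: "aF X \<psi> r \<subseteq> aF X \<phi> r" for r unfolding Fbar_le_def Phi_def coS_le_def by simp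
  show "\<forall>x\<in>topspace X. \<phi> x \<le> \<psi> x"
  proof (intro ballI, rule ccontr)
    fix x assume x: "x \<in> topspace X" and "\<not> \<phi> x \<le> \<psi> x"
    then have "\<psi> x < \<phi> x" by simp
    then obtain q where q: "\<psi> x < ereal (of_rat q)" "ereal (of_rat q) < \<phi> x" using dens3 by blast
    have "x \<in> pt X (aF X \<psi> q)" using pt_aF[of \<psi> q] x q(1) by simp
    then have "x \<in> pt X (aF X \<phi> q)" using a[of q] unfolding pt_def by blast
    then show False using pt_aF[of \<phi> q] q(2) by (simp add: not_le[symmetric])
  qed
qed

end


context T1X
begin

lemma pc_aF: "coS_pc (\<subseteq>) (opens X) (aF X \<phi> r) = SA X (gt X \<phi> r)"
proof -
  have "topspace X - pt X (aF X \<phi> r) = gt X \<phi> r"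
    unfolding pt_aF gt_def by (auto simp: not_le)
  then show ?thesis using pc_opens[OF aF_subloc] by simp
qed

lemma pc_bF: "coS_pc (\<subseteq>) (opens X) (bF X \<phi> s) = SA X (lt X \<phi> s)"
proof -
  have "topspace X - pt X (bF X \<phi> s) = lt X \<phi> s"
    unfolding pt_bF lt_def by (auto simp: not_le)
  then show ?thesis using pc_opens[OF bF_subloc] by simp
qed

lemma Phi_in: "Phi X \<phi> \<in> Fbar_frame (\<subseteq>) (opens X)"
  unfolding Fbar_frame_def mem_Collect_eq frame_hom_LIR_def
proof (intro conjI allI impI)
  fix r show "fst (Phi X \<phi>) r \<in> coS (\<subseteq>) (opens X)" by (simp add: Phi_def aF_subloc)
next
  fix s show "snd (Phi X \<phi>) s \<in> coS (\<subseteq>) (opens X)" by (simp add: Phi_def bF_subloc)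
next
  fix r s :: rat assume sr: "s \<le> r"
  let ?A = "{x \<in> topspace X. \<phi> x \<le> ereal (of_rat r)}"
  let ?B = "{x \<in> topspace X. ereal (of_rat s) \<le> \<phi> x}"
  have cov: "topspace X \<subseteq> ?A \<union> ?B"
  proof
    fix x assume x: "x \<in> topspace X"
    show "x \<in> ?A \<union> ?B"
    proof (cases "\<phi> x \<le> ereal (of_rat r)")
      case False
      then have "ereal (of_rat s) \<le> \<phi> x" using sr ereal_rat_le[of s r] by (meson le_cases order_trans)
      then show ?thesis using x by simp
    qed (use x in simp)
  qed
  have A: "SA X ?A \<subseteq> aF X \<phi> r"
  proof
    fix U assume U: "U \<in> SA X ?A"
    have "?A \<subseteq> lt X \<phi> t" if "r < t" for t
      using that ereal_rat_less[of r t] unfolding lt_def by (auto intro: le_less_trans)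
    then have "U \<in> SA X (lt X \<phi> t)" if "r < t" for t using SA_mono U that by blast
    then show "U \<in> aF X \<phi> r" using U unfolding aF_def SA_def by blast
  qed
  have B: "SA X ?B \<subseteq> bF X \<phi> s"
  proof
    fix U assume U: "U \<in> SA X ?B"
    have "?B \<subseteq> gt X \<phi> t" if "t < s" for t
    proof -
      have "ereal (of_rat t) < ereal (of_rat s)" using that by (simp only: ereal_rat_less)
      then show ?thesis unfolding gt_def using less_le_trans[of "ereal (of_rat t)" "ereal (of_rat s)"] by blast
    qed
    then have "U \<in> SA X (gt X \<phi> t)" if "t < s" for t using SA_mono U that by blast
    then show "U \<in> bF X \<phi> s" using U unfolding bF_def SA_def by blast
  qed
  have "prodS (aF X \<phi> r) (bF X \<phi> s) = opens X"
    by (rule prod_full[OF aF_subloc bF_subloc cov A B])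
  then show "coS_meet (\<subseteq>) (opens X) {fst (Phi X \<phi>) r, snd (Phi X \<phi>) s} = coS_zero (\<subseteq>) (opens X)"
    by (simp add: Phi_def coS_meet_opens[OF aF_subloc bF_subloc] coS_zero_opens)
next
  fix r
  have "aF X \<phi> r = opens X \<inter> \<Inter>{aF X \<phi> s |s. s > r}"
  proof (intro set_eqI iffI)
    fix U assume U: "U \<in> aF X \<phi> r"
    have "U \<in> aF X \<phi> s" if "r < s" for s
      using U that unfolding aF_def by (auto intro: less_trans)
    then show "U \<in> opens X \<inter> \<Inter>{aF X \<phi> s |s. s > r}" using U unfolding aF_def by auto
  next
    fix U assume U: "U \<in> opens X \<inter> \<Inter>{aF X \<phi> s |s. s > r}"
    have "U \<in> SA X (lt X \<phi> t)" if rt: "r < t" for t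
    proof -
      obtain s where "r < s" "s < t" using dense[OF rt] by blast
      then show ?thesis using U unfolding aF_def by blast
    qed
    then show "U \<in> aF X \<phi> r" using U unfolding aF_def by auto
  qed
  also have "\<dots> = coS_join (\<subseteq>) (opens X) {aF X \<phi> s |s. s > r}"
    by (rule coS_join_opens[symmetric]) (auto simp: aF_subloc)
  finally show "fst (Phi X \<phi>) r = coS_join (\<subseteq>) (opens X) {fst (Phi X \<phi>) s |s. s > r}"
    by (simp add: Phi_def)
next
  fix s
  have "bF X \<phi> s = opens X \<inter> \<Inter>{bF X \<phi> r |r. r < s}"
  proof (intro set_eqI iffI)
    fix U assume U: "U \<in> bF X \<phi> s"
    have "U \<in> bF X \<phi> r" if "r < s" for r
      using U that unfolding bF_def by (auto intro: less_trans)
    then show "U \<in> opens X \<inter> \<Inter>{bF X \<phi> r |r. r < s}" using U unfolding bF_def by auto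
  next
    fix U assume U: "U \<in> opens X \<inter> \<Inter>{bF X \<phi> r |r. r < s}"
    have "U \<in> SA X (gt X \<phi> t)" if ts: "t < s" for t
    proof -
      obtain r where "t < r" "r < s" using dense[OF ts] by blast
      then show ?thesis using U unfolding bF_def by blast
    qed
    then show "U \<in> bF X \<phi> s" using U unfolding bF_def by auto
  qed
  also have "\<dots> = coS_join (\<subseteq>) (opens X) {bF X \<phi> r |r. r < s}"
    by (rule coS_join_opens[symmetric]) (auto simp: bF_subloc)
  finally show "snd (Phi X \<phi>) s = coS_join (\<subseteq>) (opens X) {snd (Phi X \<phi>) r |r. r < s}"
    by (simp add: Phi_def)
next
  fix r s :: rat assume rs: "r < s"
  show "coS_le (coS_pc (\<subseteq>) (opens X) (fst (Phi X \<phi>) r)) (snd (Phi X \<phi>) s)"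
    unfolding Phi_def coS_le_def fst_conv snd_conv pc_aF using rs unfolding bF_def by blast
  show "coS_le (coS_pc (\<subseteq>) (opens X) (snd (Phi X \<phi>) s)) (fst (Phi X \<phi>) r)"
    unfolding Phi_def coS_le_def fst_conv snd_conv pc_bF using rs unfolding aF_def by blast
qed

end


lemma Phi_restrict: "Phi X (restrict \<phi> (topspace X)) = Phi X \<phi>"
proof -
  have "lt X (restrict \<phi> (topspace X)) = lt X \<phi>" "gt X (restrict \<phi> (topspace X)) = gt X \<phi>"
    unfolding lt_def gt_def by (auto intro!: ext)
  then show ?thesis unfolding Phi_def aF_def bF_def by simp
qed

context T1X
begin

lemma Phi_surj:
  assumes f: "f \<in> Fbar_frame (\<subseteq>) (opens X)"
  shows "\<exists>\<phi>\<in>Fbar_space X. Phi X \<phi> = f"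
proof -
  obtain a b where fab: "f = (a, b)" by (cases f)
  let ?T = "topspace X"
  have f': "frame_hom_LIR (\<subseteq>) (opens X) (a, b) \<and> (\<forall>r s. r < s \<longrightarrow> coS_le (coS_pc (\<subseteq>) (opens X) (fst (a, b) r)) (snd (a, b) s)
                    \<and> coS_le (coS_pc (\<subseteq>) (opens X) (snd (a, b) s)) (fst (a, b) r))"
    using f unfolding fab Fbar_frame_def mem_Collect_eq by blast
  have F0: "(\<forall>r. a r \<in> coS (\<subseteq>) (opens X)) \<and> (\<forall>s. b s \<in> coS (\<subseteq>) (opens X)) \<and>
     (\<forall>r s. s \<le> r \<longrightarrow> coS_meet (\<subseteq>) (opens X) {a r, b s} = coS_zero (\<subseteq>) (opens X)) \<and>
     (\<forall>r. a r = coS_join (\<subseteq>) (opens X) {a s |s. s > r}) \<and>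
     (\<forall>s. b s = coS_join (\<subseteq>) (opens X) {b r |r. r < s})"
    using conjunct1[OF f'] unfolding frame_hom_LIR_def fst_conv snd_conv .
  have pc: "\<And>r s. r < s \<Longrightarrow> coS_le (coS_pc (\<subseteq>) (opens X) (a r)) (b s)
                    \<and> coS_le (coS_pc (\<subseteq>) (opens X) (b s)) (a r)"
    using conjunct2[OF f'] unfolding fst_conv snd_conv by blast
  have ha: "\<And>r. subloc X (a r)" and hb: "\<And>s. subloc X (b s)"
    using F0 in_coS_opens by blast+
  have h1: "\<And>r s. s \<le> r \<Longrightarrow> prodS (a r) (b s) = opens X"
  proof -
    fix r s :: rat assume "s \<le> r"
    then have "coS_meet (\<subseteq>) (opens X) {a r, b s} = coS_zero (\<subseteq>) (opens X)" using F0 by blast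
    then show "prodS (a r) (b s) = opens X" by (simp only: coS_meet_opens[OF ha hb] coS_zero_opens)
  qed
  have h3: "\<And>r. a r = opens X \<inter> \<Inter>{a s |s. s > r}"
  proof -
    fix r
    have "a r = coS_join (\<subseteq>) (opens X) {a s |s. s > r}" using F0 by blast
    also have "\<dots> = opens X \<inter> \<Inter>{a s |s. s > r}" by (rule coS_join_opens) (use ha in blast)
    finally show "a r = opens X \<inter> \<Inter>{a s |s. s > r}" .
  qed
  have h4: "\<And>s. b s = opens X \<inter> \<Inter>{b r |r. r < s}"
  proof -
    fix s
    have "b s = coS_join (\<subseteq>) (opens X) {b r |r. r < s}" using F0 by blast
    also have "\<dots> = opens X \<inter> \<Inter>{b r |r. r < s}" by (rule coS_join_opens) (use hb in blast)
    finally show "b s = opens X \<inter> \<Inter>{b r |r. r < s}" .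
  qed
  have pcb: "\<And>r s. r < s \<Longrightarrow> b s \<subseteq> SA X (?T - pt X (a r))"
    using pc unfolding coS_le_def pc_opens[OF ha] by blast
  have pca: "\<And>r s. r < s \<Longrightarrow> a r \<subseteq> SA X (?T - pt X (b s))"
    using pc unfolding coS_le_def pc_opens[OF hb] by blast
  define A where "A r = pt X (a r)" for r
  define B where "B s = pt X (b s)" for s
  have amono: "a r \<subseteq> a s" if "r < s" for r s using h3[of r] that by blast
  have bmono: "b s \<subseteq> b r" if "r < s" for r s using h4[of s] that by blast
  have Amono: "A r \<subseteq> A s" if "r < s" for r s using amono[OF that] unfolding A_def pt_def by blast
  have AB: "x \<in> A r \<or> x \<in> B s" if "s \<le> r" "x \<in> ?T" for r s x
    using cover_pt[OF ha hb h1[OF that(1)] that(2)] unfolding A_def B_def by blast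
  have disj: "x \<notin> A r" if "r < s" "x \<in> B s" for r s x
  proof -
    have "Px X x \<in> SA X (?T - A r)" using that pcb[OF that(1)] unfolding B_def A_def pt_def by blast
    then show ?thesis using Px_in_SA that(2) unfolding B_def pt_def by blast
  qed
  have Ainter: "x \<in> A r" if "x \<in> ?T" "\<And>s. r < s \<Longrightarrow> x \<in> A s" for x r
  proof -
    have "Px X x \<in> a s" if "r < s" for s using \<open>\<And>s. r < s \<Longrightarrow> x \<in> A s\<close>[OF that] unfolding A_def pt_def by blast
    then have "Px X x \<in> a r" using h3[of r] Px_open[OF \<open>x \<in> ?T\<close>] by auto
    then show ?thesis using \<open>x \<in> ?T\<close> unfolding A_def pt_def by blast
  qed
  have Binter: "x \<in> B s" if "x \<in> ?T" "\<And>r. r < s \<Longrightarrow> x \<in> B r" for x s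
  proof -
    have "Px X x \<in> b r" if "r < s" for r using \<open>\<And>r. r < s \<Longrightarrow> x \<in> B r\<close>[OF that] unfolding B_def pt_def by blast
    then have "Px X x \<in> b s" using h4[of s] Px_open[OF \<open>x \<in> ?T\<close>] by auto
    then show ?thesis using \<open>x \<in> ?T\<close> unfolding B_def pt_def by blast
  qed
  define \<phi> where "\<phi> x = Inf {ereal (of_rat r) | r. x \<in> A r}" for x
  have Aeq: "A r = {x \<in> ?T. \<phi> x \<le> ereal (of_rat r)}" for r
  proof (intro set_eqI iffI)
    fix x assume x: "x \<in> A r"
    then have "x \<in> ?T" unfolding A_def pt_def by blast
    moreover have "\<phi> x \<le> ereal (of_rat r)" unfolding \<phi>_def using x by (auto intro: Inf_lower)
    ultimately show "x \<in> {x \<in> ?T. \<phi> x \<le> ereal (of_rat r)}" by blast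
  next
    fix x assume x: "x \<in> {x \<in> ?T. \<phi> x \<le> ereal (of_rat r)}"
    have "x \<in> A s" if rs: "r < s" for s
    proof -
      have "\<phi> x < ereal (of_rat s)" using x rs ereal_rat_less[of r s] by (auto intro: le_less_trans)
      then obtain r' where r': "x \<in> A r'" "ereal (of_rat r') < ereal (of_rat s)"
        unfolding \<phi>_def Inf_less_iff by blast
      then have "r' < s" by (simp only: ereal_rat_less)
      then show ?thesis using Amono r'(1) by blast
    qed
    then show "x \<in> A r" using Ainter x by blast
  qed
  have Beq: "B s = {x \<in> ?T. ereal (of_rat s) \<le> \<phi> x}" for s
  proof (intro set_eqI iffI)
    fix x assume x: "x \<in> B s"
    then have "x \<in> ?T" unfolding B_def pt_def by blast
    moreover have "ereal (of_rat s) \<le> \<phi> x" unfolding \<phi>_def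
    proof (rule Inf_greatest)
      fix e assume "e \<in> {ereal (of_rat r) | r. x \<in> A r}"
      then obtain r where r: "e = ereal (of_rat r)" "x \<in> A r" by blast
      then have "\<not> r < s" using disj x by blast
      then show "ereal (of_rat s) \<le> e" using r(1) ereal_rat_le[of s r] by simp
    qed
    ultimately show "x \<in> {x \<in> ?T. ereal (of_rat s) \<le> \<phi> x}" by blast
  next
    fix x assume x: "x \<in> {x \<in> ?T. ereal (of_rat s) \<le> \<phi> x}"
    have "x \<in> B r" if rs: "r < s" for r
    proof -
      have "x \<notin> A r"
      proof
        assume "x \<in> A r"
        then have "\<phi> x \<le> ereal (of_rat r)" using Aeq by blast
        moreover have "ereal (of_rat r) < ereal (of_rat s)" using rs by (simp only: ereal_rat_less)
        ultimately have "\<phi> x < ereal (of_rat s)" by (rule le_less_trans)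
        then show False using x by (simp add: not_le[symmetric])
      qed
      then show ?thesis using AB[of r r x] x by blast
    qed
    then show "x \<in> B s" using Binter x by blast
  qed
  have SAa: "SA X (A r) \<subseteq> a r" for r unfolding A_def by (rule SA_pt_sub[OF ha])
  have SAb: "SA X (B s) \<subseteq> b s" for s unfolding B_def by (rule SA_pt_sub[OF hb])
  have lteq: "?T - B s = lt X \<phi> s" for s unfolding Beq lt_def by (auto simp: not_le)
  have gteq: "?T - A r = gt X \<phi> r" for r unfolding Aeq gt_def by (auto simp: not_le)
  have aeq: "a r = aF X \<phi> r" for r
  proof
    show "a r \<subseteq> aF X \<phi> r"
    proof
      fix U assume U: "U \<in> a r"
      have "U \<in> SA X (lt X \<phi> s)" if "r < s" for s
        using pca[OF that] U lteq[of s] unfolding B_def by auto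
      then show "U \<in> aF X \<phi> r" using U subloc_open[OF ha] unfolding aF_def by blast
    qed
  next
    show "aF X \<phi> r \<subseteq> a r"
    proof
      fix U assume U: "U \<in> aF X \<phi> r"
      have "U \<in> a s" if rs: "r < s" for s
      proof -
        have "lt X \<phi> s \<subseteq> A s" unfolding Aeq lt_def by auto
        then have "U \<in> SA X (A s)" using U rs SA_mono unfolding aF_def by blast
        then show ?thesis using SAa by blast
      qed
      then show "U \<in> a r" using h3[of r] U unfolding aF_def by auto
    qed
  qed
  have beq: "b s = bF X \<phi> s" for s
  proof
    show "b s \<subseteq> bF X \<phi> s"
    proof
      fix U assume U: "U \<in> b s"
      have "U \<in> SA X (gt X \<phi> r)" if "r < s" for r
        using pcb[OF that] U gteq[of r] unfolding A_def by auto
      then show "U \<in> bF X \<phi> s" using U subloc_open[OF hb] unfolding bF_def by blast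
    qed
  next
    show "bF X \<phi> s \<subseteq> b s"
    proof
      fix U assume U: "U \<in> bF X \<phi> s"
      have "U \<in> b r" if rs: "r < s" for r
      proof -
        have "gt X \<phi> r \<subseteq> B r" unfolding Beq gt_def by auto
        then have "U \<in> SA X (B r)" using U rs SA_mono unfolding bF_def by blast
        then show ?thesis using SAb by blast
      qed
      then show "U \<in> b s" using h4[of s] U unfolding bF_def by auto
    qed
  qed
  have "Phi X (restrict \<phi> ?T) = Phi X \<phi>" by (rule Phi_restrict)
  also have "\<dots> = f" unfolding fab Phi_def using aeq beq by auto
  finally have "Phi X (restrict \<phi> ?T) = f" .
  moreover have "restrict \<phi> ?T \<in> Fbar_space X" unfolding Fbar_space_def by simp
  ultimately show ?thesis by blast
qed

end


lemma Fbar_le_refl: "Fbar_le f f"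
  unfolding Fbar_le_def coS_le_def by simp

lemma Fbar_le_antisym: "Fbar_le f g \<Longrightarrow> Fbar_le g f \<Longrightarrow> f = g"
  unfolding Fbar_le_def coS_le_def
  by (metis prod_eqI ext subset_antisym)

context T1X
begin

lemma Phi_cong: "(\<And>x. x \<in> topspace X \<Longrightarrow> \<phi> x = \<psi> x) \<Longrightarrow> Phi X \<phi> = Phi X \<psi>"
  by (rule Fbar_le_antisym) (auto simp: Phi_le_iff)

lemma Phi_top: "Fbar_top (\<subseteq>) (opens X) = Phi X (\<lambda>_. \<infinity>)"
proof -
  have l0: "lt X (\<lambda>_. \<infinity>) s = {}" for s unfolding lt_def by auto
  have a: "aF X (\<lambda>_. \<infinity>) r = {topspace X}" for r
  proof -
    have "aF X (\<lambda>_. \<infinity>) r = {U. openin X U \<and> (\<forall>s. r < s \<longrightarrow> U = topspace X)}"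
      unfolding aF_def l0 SA_empty by simp
    then show ?thesis by (auto simp: gt_ex)
  qed
  have g0: "gt X (\<lambda>_. \<infinity>) s = topspace X" for s unfolding gt_def by auto
  have b: "bF X (\<lambda>_. \<infinity>) r = opens X" for r
    unfolding bF_def g0 SA_top[OF order_refl] by auto
  show ?thesis unfolding Fbar_top_def Phi_def coS_one_opens coS_zero_opens
    using a b by auto
qed

lemma Phi_bot: "Fbar_bot (\<subseteq>) (opens X) = Phi X (\<lambda>_. -\<infinity>)"
proof -
  have g0: "gt X (\<lambda>_. -\<infinity>) s = {}" for s unfolding gt_def by auto
  have b: "bF X (\<lambda>_. -\<infinity>) r = {topspace X}" for r
  proof -
    have "bF X (\<lambda>_. -\<infinity>) r = {U. openin X U \<and> (\<forall>s. s < r \<longrightarrow> U = topspace X)}"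
      unfolding bF_def g0 SA_empty by simp
    then show ?thesis by (auto simp: lt_ex)
  qed
  have l0: "lt X (\<lambda>_. -\<infinity>) s = topspace X" for s unfolding lt_def by auto
  have a: "aF X (\<lambda>_. -\<infinity>) r = opens X" for r
    unfolding aF_def l0 SA_top[OF order_refl] by auto
  show ?thesis unfolding Fbar_bot_def Phi_def coS_one_opens coS_zero_opens
    using a b by auto
qed

lemma Phi_F_iff: "Phi X \<psi> \<in> F_frame (\<subseteq>) (opens X) \<longleftrightarrow> (\<forall>x\<in>topspace X. \<psi> x \<noteq> \<infinity> \<and> \<psi> x \<noteq> -\<infinity>)"
proof
  assume H: "Phi X \<psi> \<in> F_frame (\<subseteq>) (opens X)"
  show "\<forall>x\<in>topspace X. \<psi> x \<noteq> \<infinity> \<and> \<psi> x \<noteq> -\<infinity>"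
  proof (intro ballI conjI notI)
    fix x assume x: "x \<in> topspace X" and px: "\<psi> x = \<infinity>"
    define chi where "chi y = (if y = x then -\<infinity> else (\<infinity>::ereal))" for y :: 'a
    have lub: "is_lub Fbar_le (Fbar_frame (\<subseteq>) (opens X)) {Phi X \<psi>, Phi X chi} (Fbar_top (\<subseteq>) (opens X))"
      unfolding is_lub_def Phi_top
    proof (intro conjI ballI impI)
      show "Phi X (\<lambda>_. \<infinity>) \<in> Fbar_frame (\<subseteq>) (opens X)" by (rule Phi_in)
    next
      fix s assume "s \<in> {Phi X \<psi>, Phi X chi}"
      then show "Fbar_le s (Phi X (\<lambda>_. \<infinity>))" by (auto simp: Phi_le_iff)
    next
      fix y assume y: "y \<in> Fbar_frame (\<subseteq>) (opens X)" and ub: "\<forall>s\<in>{Phi X \<psi>, Phi X chi}. Fbar_le s y"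
      obtain \<omega> where \<omega>: "y = Phi X \<omega>" using Phi_surj[OF y] by metis
      have "\<psi> z \<le> \<omega> z" "chi z \<le> \<omega> z" if "z \<in> topspace X" for z
        using ub that unfolding \<omega> by (auto simp: Phi_le_iff)
      then have "\<omega> z = \<infinity>" if "z \<in> topspace X" for z
        using that px unfolding chi_def by (metis (full_types) top_ereal_def top_unique)
      then show "Fbar_le (Phi X (\<lambda>_. \<infinity>)) y" unfolding \<omega> Phi_le_iff by auto
    qed
    have "Phi X chi \<in> Fbar_frame (\<subseteq>) (opens X)" by (rule Phi_in)
    then have "Phi X chi = Fbar_top (\<subseteq>) (opens X)" using H lub unfolding F_frame_def by blast
    then have "Fbar_le (Phi X (\<lambda>_. \<infinity>)) (Phi X chi)" unfolding Phi_top by (simp add: Fbar_le_refl)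
    then have "\<infinity> \<le> chi x" using x unfolding Phi_le_iff by blast
    then show False unfolding chi_def by simp
  next
    fix x assume x: "x \<in> topspace X" and px: "\<psi> x = -\<infinity>"
    define chi where "chi y = (if y = x then \<infinity> else (-\<infinity>::ereal))" for y :: 'a
    have glb: "is_glb Fbar_le (Fbar_frame (\<subseteq>) (opens X)) {Phi X \<psi>, Phi X chi} (Fbar_bot (\<subseteq>) (opens X))"
      unfolding is_glb_def Phi_bot
    proof (intro conjI ballI impI)
      show "Phi X (\<lambda>_. -\<infinity>) \<in> Fbar_frame (\<subseteq>) (opens X)" by (rule Phi_in)
    next
      fix s assume "s \<in> {Phi X \<psi>, Phi X chi}"
      then show "Fbar_le (Phi X (\<lambda>_. -\<infinity>)) s" by (auto simp: Phi_le_iff)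
    next
      fix y assume y: "y \<in> Fbar_frame (\<subseteq>) (opens X)" and lb: "\<forall>s\<in>{Phi X \<psi>, Phi X chi}. Fbar_le y s"
      obtain \<omega> where \<omega>: "y = Phi X \<omega>" using Phi_surj[OF y] by metis
      have "\<omega> z \<le> \<psi> z" "\<omega> z \<le> chi z" if "z \<in> topspace X" for z
        using lb that unfolding \<omega> by (auto simp: Phi_le_iff)
      then have "\<omega> z = -\<infinity>" if "z \<in> topspace X" for z
        using that px unfolding chi_def by (metis (full_types) bot_ereal_def bot_unique)
      then show "Fbar_le y (Phi X (\<lambda>_. -\<infinity>))" unfolding \<omega> Phi_le_iff by auto
    qed
    have "Phi X chi \<in> Fbar_frame (\<subseteq>) (opens X)" by (rule Phi_in)
    then have "Phi X chi = Fbar_bot (\<subseteq>) (opens X)" using H glb unfolding F_frame_def by blast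
    then have "Fbar_le (Phi X chi) (Phi X (\<lambda>_. -\<infinity>))" unfolding Phi_bot by (simp add: Fbar_le_refl)
    then have "chi x \<le> -\<infinity>" using x unfolding Phi_le_iff by blast
    then show False unfolding chi_def by simp
  qed
next
  assume H: "\<forall>x\<in>topspace X. \<psi> x \<noteq> \<infinity> \<and> \<psi> x \<noteq> -\<infinity>"
  have "(is_lub Fbar_le (Fbar_frame (\<subseteq>) (opens X)) {Phi X \<psi>, g} (Fbar_top (\<subseteq>) (opens X)) \<longrightarrow> g = Fbar_top (\<subseteq>) (opens X)) \<and>
        (is_glb Fbar_le (Fbar_frame (\<subseteq>) (opens X)) {Phi X \<psi>, g} (Fbar_bot (\<subseteq>) (opens X)) \<longrightarrow> g = Fbar_bot (\<subseteq>) (opens X))"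
    if g: "g \<in> Fbar_frame (\<subseteq>) (opens X)" for g
  proof (intro conjI impI)
    obtain chi where chi: "g = Phi X chi" using Phi_surj[OF g] by metis
    assume lub: "is_lub Fbar_le (Fbar_frame (\<subseteq>) (opens X)) {Phi X \<psi>, g} (Fbar_top (\<subseteq>) (opens X))"
    have "chi x = \<infinity>" if x: "x \<in> topspace X" for x
    proof (rule ccontr)
      assume cx: "chi x \<noteq> \<infinity>"
      define \<omega> where "\<omega> y = (if y = x then max (\<psi> x) (chi x) else \<infinity>)" for y
      have "Fbar_le (Phi X \<psi>) (Phi X \<omega>)" "Fbar_le (Phi X chi) (Phi X \<omega>)"
        unfolding Phi_le_iff \<omega>_def by auto
      then have "Fbar_le (Fbar_top (\<subseteq>) (opens X)) (Phi X \<omega>)"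
        using lub Phi_in[of \<omega>] unfolding is_lub_def chi by blast
      then have "\<infinity> \<le> \<omega> x" unfolding Phi_top Phi_le_iff using x by blast
      then show False using cx H x unfolding \<omega>_def by (auto simp: max_def split: if_splits)
    qed
    then show "g = Fbar_top (\<subseteq>) (opens X)" unfolding chi Phi_top by (rule Phi_cong)
  next
    obtain chi where chi: "g = Phi X chi" using Phi_surj[OF g] by metis
    assume glb: "is_glb Fbar_le (Fbar_frame (\<subseteq>) (opens X)) {Phi X \<psi>, g} (Fbar_bot (\<subseteq>) (opens X))"
    have "chi x = -\<infinity>" if x: "x \<in> topspace X" for x
    proof (rule ccontr)
      assume cx: "chi x \<noteq> -\<infinity>"
      define \<omega> where "\<omega> y = (if y = x then min (\<psi> x) (chi x) else -\<infinity>)" for y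
      have "Fbar_le (Phi X \<omega>) (Phi X \<psi>)" "Fbar_le (Phi X \<omega>) (Phi X chi)"
        unfolding Phi_le_iff \<omega>_def by auto
      then have "Fbar_le (Phi X \<omega>) (Fbar_bot (\<subseteq>) (opens X))"
        using glb Phi_in[of \<omega>] unfolding is_glb_def chi by blast
      then have "\<omega> x \<le> -\<infinity>" unfolding Phi_bot Phi_le_iff using x by blast
      then show False using cx H x unfolding \<omega>_def by (auto simp: min_def split: if_splits)
    qed
    then show "g = Fbar_bot (\<subseteq>) (opens X)" unfolding chi Phi_bot by (rule Phi_cong)
  qed
  then show "Phi X \<psi> \<in> F_frame (\<subseteq>) (opens X)"
    unfolding F_frame_def using Phi_in[of \<psi>] by blast
qed

end


context T1X
begin

lemma part1: "order_isomorphic (Fbar_space X) (pointwise_le X) (Fbar_frame (\<subseteq>) (opens X)) Fbar_le"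
  unfolding order_isomorphic_def
proof (intro exI conjI ballI)
  show ord: "pointwise_le X \<phi> \<psi> \<longleftrightarrow> Fbar_le (Phi X \<phi>) (Phi X \<psi>)" for \<phi> \<psi>
    unfolding pointwise_le_def Phi_le_iff ..
  show "bij_betw (Phi X) (Fbar_space X) (Fbar_frame (\<subseteq>) (opens X))"
    unfolding bij_betw_def
  proof
    show "inj_on (Phi X) (Fbar_space X)"
    proof (rule inj_onI)
      fix \<phi> \<psi> assume \<phi>: "\<phi> \<in> Fbar_space X" and \<psi>: "\<psi> \<in> Fbar_space X" and eq: "Phi X \<phi> = Phi X \<psi>"
      have "Fbar_le (Phi X \<phi>) (Phi X \<psi>)" "Fbar_le (Phi X \<psi>) (Phi X \<phi>)"
        using eq Fbar_le_refl by simp_all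
      then have "\<forall>x\<in>topspace X. \<phi> x \<le> \<psi> x" "\<forall>x\<in>topspace X. \<psi> x \<le> \<phi> x"
        by (simp_all only: Phi_le_iff)
      then have "\<phi> x = \<psi> x" if "x \<in> topspace X" for x using that order_antisym by blast
      moreover have "\<phi> \<in> extensional (topspace X)" "\<psi> \<in> extensional (topspace X)"
        using \<phi> \<psi> unfolding Fbar_space_def by (auto simp: PiE_iff)
      ultimately show "\<phi> = \<psi>" by (metis extensionalityI)
    qed
    show "Phi X ` Fbar_space X = Fbar_frame (\<subseteq>) (opens X)"
    proof
      show "Phi X ` Fbar_space X \<subseteq> Fbar_frame (\<subseteq>) (opens X)" using Phi_in by blast
      show "Fbar_frame (\<subseteq>) (opens X) \<subseteq> Phi X ` Fbar_space X"
      proof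
        fix f assume "f \<in> Fbar_frame (\<subseteq>) (opens X)"
        then obtain \<phi> where "\<phi> \<in> Fbar_space X" "Phi X \<phi> = f" using Phi_surj by blast
        then show "f \<in> Phi X ` Fbar_space X" by blast
      qed
    qed
  qed
qed

lemma part2: "order_isomorphic (F_space X) (pointwise_le X) (F_frame (\<subseteq>) (opens X)) Fbar_le"
  unfolding order_isomorphic_def
proof (intro exI[of _ "\<lambda>\<phi>. Phi X (\<lambda>x. ereal (\<phi> x))"] conjI ballI)
  show ord: "pointwise_le X \<phi> \<psi> \<longleftrightarrow> Fbar_le (Phi X (\<lambda>x. ereal (\<phi> x))) (Phi X (\<lambda>x. ereal (\<psi> x)))" for \<phi> \<psi> :: "'a \<Rightarrow> real"
    unfolding pointwise_le_def Phi_le_iff by simp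
  show "bij_betw (\<lambda>\<phi>. Phi X (\<lambda>x. ereal (\<phi> x))) (F_space X) (F_frame (\<subseteq>) (opens X))"
    unfolding bij_betw_def
  proof
    show "inj_on (\<lambda>\<phi>. Phi X (\<lambda>x. ereal (\<phi> x))) (F_space X)"
    proof (rule inj_onI)
      fix \<phi> \<psi> :: "'a \<Rightarrow> real" assume \<phi>: "\<phi> \<in> F_space X" and \<psi>: "\<psi> \<in> F_space X"
        and eq: "Phi X (\<lambda>x. ereal (\<phi> x)) = Phi X (\<lambda>x. ereal (\<psi> x))"
      have "Fbar_le (Phi X (\<lambda>x. ereal (\<phi> x))) (Phi X (\<lambda>x. ereal (\<psi> x)))"
           "Fbar_le (Phi X (\<lambda>x. ereal (\<psi> x))) (Phi X (\<lambda>x. ereal (\<phi> x)))"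
        using eq Fbar_le_refl by simp_all
      then have "\<forall>x\<in>topspace X. ereal (\<phi> x) \<le> ereal (\<psi> x)" "\<forall>x\<in>topspace X. ereal (\<psi> x) \<le> ereal (\<phi> x)"
        by (simp_all only: Phi_le_iff)
      then have "\<phi> x = \<psi> x" if "x \<in> topspace X" for x using that by (simp add: order_antisym)
      moreover have "\<phi> \<in> extensional (topspace X)" "\<psi> \<in> extensional (topspace X)"
        using \<phi> \<psi> unfolding F_space_def by (auto simp: PiE_iff)
      ultimately show "\<phi> = \<psi>" by (metis extensionalityI)
    qed
    show "(\<lambda>\<phi>. Phi X (\<lambda>x. ereal (\<phi> x))) ` F_space X = F_frame (\<subseteq>) (opens X)"
    proof
      show "(\<lambda>\<phi>. Phi X (\<lambda>x. ereal (\<phi> x))) ` F_space X \<subseteq> F_frame (\<subseteq>) (opens X)"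
      proof
        fix f assume "f \<in> (\<lambda>\<phi>. Phi X (\<lambda>x. ereal (\<phi> x))) ` F_space X"
        then obtain \<phi> :: "'a \<Rightarrow> real" where "f = Phi X (\<lambda>x. ereal (\<phi> x))" by blast
        then show "f \<in> F_frame (\<subseteq>) (opens X)" using Phi_F_iff[of "\<lambda>x. ereal (\<phi> x)"] by simp
      qed
      show "F_frame (\<subseteq>) (opens X) \<subseteq> (\<lambda>\<phi>. Phi X (\<lambda>x. ereal (\<phi> x))) ` F_space X"
      proof
        fix f assume f: "f \<in> F_frame (\<subseteq>) (opens X)"
        then have "f \<in> Fbar_frame (\<subseteq>) (opens X)" unfolding F_frame_def by blast
        then obtain \<psi> where \<psi>: "f = Phi X \<psi>" using Phi_surj by metis
        then have fin: "\<forall>x\<in>topspace X. \<psi> x \<noteq> \<infinity> \<and> \<psi> x \<noteq> -\<infinity>" using f Phi_F_iff by blast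
        define \<phi> where "\<phi> = restrict (\<lambda>x. real_of_ereal (\<psi> x)) (topspace X)"
        have "\<phi> \<in> F_space X" unfolding F_space_def \<phi>_def by simp
        moreover have "Phi X (\<lambda>x. ereal (\<phi> x)) = f"
          unfolding \<psi> using fin by (intro Phi_cong) (auto simp: \<phi>_def ereal_real)
        ultimately show "f \<in> (\<lambda>\<phi>. Phi X (\<lambda>x. ereal (\<phi> x))) ` F_space X" by blast
      qed
    qed
  qed
qed

end

theorem mainTheorem14:
  fixes X :: "'a topology"
  assumes "t1_space X"
  shows "order_isomorphic (Fbar_space X) (pointwise_le X)
           (Fbar_frame (\<subseteq>) (opens X)) Fbar_le
       \<and> order_isomorphic (F_space X) (pointwise_le X)
           (F_frame (\<subseteq>) (opens X)) Fbar_le"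
proof -
  interpret T1X X by (rule T1X.intro[OF assms])
  show ?thesis using part1 part2 by blast
qed

end
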